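(* Define the relation $\succeq^3$ on $\mathcal{A}$ by $\mathbf{A}\succeq^3\mathbf{B}\iff\kappa(\mathbf{A})\le\kappa(\mathbf{B})$, where for $\mathbf{A}=[a_{ij}]$ of size $n$, $\kappa(\mathbf{A})=\max_{1\le i<j<k\le n}\max\{a_{jk}^2/a_{ik},\ a_{ik}/a_{jk}^2\}$. Then $\succeq^3$ is an inconsistency ranking that satisfies PR, IIP, SI, MON and RED, but does not satisfy HTE.
   Context: A pairwise comparison matrix of size $n$ is a matrix $\mathbf{A}=[a_{ij}]\in\mathbb{R}^{n\times n}$ with all entries positive and $a_{ji}=1/a_{ij}$ for all $i,j$. Let $\mathcal{A}$ denote the set of all pairwise comparison matrices of all sizes $n\ge 3$. For $\mathbf{A}\in\mathcal{A}$ of size $n$ and $3\le m\le n$, a submatrix of $\mathbf{A}$ is a matrix $\mathbf{B}=[b_{ij}]$ of size $m$ with $b_{ij}=a_{\sigma(i)\sigma(j)}$ for some strictly increasing map $\sigma:\{1,\dots,m\}\to\{1,\dots,n\}$. A triad is a pairwise comparison matrix of size $3$; a triad of $\mathbf{A}$ is a submatrix of $\mathbf{A}$ of size $3$ (when $n=3$, $\mathbf{A}$ is its own unique triad). A triad $\mathbf{T}$ is written $\mathbf{T}=(t_1;t_2;t_3)$, meaning $t_{12}=t_1$, $t_{13}=t_2$, $t_{23}=t_3$ (the remaining entries are determined by reciprocity); $\mathbf{T}^\top$ denotes its transpose, i.e. the triad $(1/t_1;1/t_2;1/t_3)$. An inconsistency ranking is a complete and transitive binary relation $\succeq$ on $\mathcal{A}$;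 $\mathbf{A}\sim\mathbf{B}$ means $\mathbf{A}\succeq\mathbf{B}$ and $\mathbf{B}\succeq\mathbf{A}$; $\mathbf{A}\preceq\mathbf{B}$ means $\mathbf{B}\succeq\mathbf{A}$. Properties of an inconsistency ranking $\succeq$: (PR) for all $s_2,t_2\ge 1$: $(1;s_2;1)\succeq(1;t_2;1)\iff s_2\le t_2$. (IIP) $\mathbf{T}\sim\mathbf{T}^\top$ for every triad $\mathbf{T}$. (HTE) $(1;t_2;t_3)\sim(1;t_2/t_3;1)$ for all $t_2,t_3>0$. (SI) $(t_1;t_2;t_3)\sim(kt_1;k^2t_2;kt_3)$ for all $t_1,t_2,t_3>0$ and all $k>0$. (MON) $\mathbf{A}\preceq\mathbf{T}$ for every $\mathbf{A}\in\mathcal{A}$ and every triad $\mathbf{T}$ of $\mathbf{A}$. (RED) every $\mathbf{A}\in\mathcal{A}$ has a triad $\mathbf{T}$ with $\mathbf{A}\sim\mathbf{T}$. *)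

theory Defs
  imports Main Complex_Main
begin

text \<open>A matrix of size n is represented as a pair (n, a) with entries a i j for
  0 \<le> i, j < n (0-based indices). Entries outside the index range are normalised to 1,
  so that each matrix has a unique representation.\<close>

type_synonym pcm = "nat \<times> (nat \<Rightarrow> nat \<Rightarrow> real)"

definition is_pcm :: "pcm \<Rightarrow> bool" where
  "is_pcm A \<longleftrightarrow> (let n = fst A; a = snd A in
     (\<forall>i<n. \<forall>j<n. a i j > 0 \<and> a j i = 1 / a i j) \<and>
     (\<forall>i j. (i \<ge> n \<or> j \<ge> n) \<longrightarrow> a i j = 1))"

definition PCMs :: "pcm set" where
  "PCMs = {A. fst A \<ge> 3 \<and> is_pcm A}"

definition submatrix :: "pcm \<Rightarrow> nat \<Rightarrow> (nat \<Rightarrow> nat) \<Rightarrow> pcm" where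
  "submatrix A m \<sigma> = (m, \<lambda>i j. if i < m \<and> j < m then snd A (\<sigma> i) (\<sigma> j) else 1)"

definition is_submatrix :: "pcm \<Rightarrow> pcm \<Rightarrow> bool" where
  "is_submatrix B A \<longleftrightarrow> (\<exists>m \<sigma>. 3 \<le> m \<and> m \<le> fst A \<and>
     (\<forall>i j. i < j \<and> j < m \<longrightarrow> \<sigma> i < \<sigma> j) \<and> (\<forall>i<m. \<sigma> i < fst A) \<and>
     B = submatrix A m \<sigma>)"

text \<open>The triad (t1; t2; t3): t_12 = t1, t_13 = t2, t_23 = t3 (1-based), i.e.
  entries (0,1), (0,2), (1,2) in 0-based indexing.\<close>
definition triad :: "real \<Rightarrow> real \<Rightarrow> real \<Rightarrow> pcm" where
  "triad t1 t2 t3 = (3, \<lambda>i j.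
     if i = 0 \<and> j = 1 then t1 else if i = 1 \<and> j = 0 then 1 / t1
     else if i = 0 \<and> j = 2 then t2 else if i = 2 \<and> j = 0 then 1 / t2
     else if i = 1 \<and> j = 2 then t3 else if i = 2 \<and> j = 1 then 1 / t3
     else 1)"

definition is_triad_of :: "pcm \<Rightarrow> pcm \<Rightarrow> bool" where
  "is_triad_of T A \<longleftrightarrow> is_submatrix T A \<and> fst T = 3"

definition inconsistency_ranking :: "(pcm \<Rightarrow> pcm \<Rightarrow> bool) \<Rightarrow> bool" where
  "inconsistency_ranking R \<longleftrightarrow>
     (\<forall>A\<in>PCMs. \<forall>B\<in>PCMs. R A B \<or> R B A) \<and>
     (\<forall>A\<in>PCMs. \<forall>B\<in>PCMs. \<forall>C\<in>PCMs. R A B \<and> R B C \<longrightarrow> R A C)"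

definition rank_eq :: "(pcm \<Rightarrow> pcm \<Rightarrow> bool) \<Rightarrow> pcm \<Rightarrow> pcm \<Rightarrow> bool" where
  "rank_eq R A B \<longleftrightarrow> R A B \<and> R B A"

definition prop_PR :: "(pcm \<Rightarrow> pcm \<Rightarrow> bool) \<Rightarrow> bool" where
  "prop_PR R \<longleftrightarrow> (\<forall>s2 t2. s2 \<ge> 1 \<and> t2 \<ge> 1 \<longrightarrow>
     (R (triad 1 s2 1) (triad 1 t2 1) \<longleftrightarrow> s2 \<le> t2))"

definition prop_IIP :: "(pcm \<Rightarrow> pcm \<Rightarrow> bool) \<Rightarrow> bool" where
  "prop_IIP R \<longleftrightarrow> (\<forall>t1 t2 t3. t1 > 0 \<and> t2 > 0 \<and> t3 > 0 \<longrightarrow>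
     rank_eq R (triad t1 t2 t3) (triad (1/t1) (1/t2) (1/t3)))"

definition prop_HTE :: "(pcm \<Rightarrow> pcm \<Rightarrow> bool) \<Rightarrow> bool" where
  "prop_HTE R \<longleftrightarrow> (\<forall>t2 t3. t2 > 0 \<and> t3 > 0 \<longrightarrow>
     rank_eq R (triad 1 t2 t3) (triad 1 (t2/t3) 1))"

definition prop_SI :: "(pcm \<Rightarrow> pcm \<Rightarrow> bool) \<Rightarrow> bool" where
  "prop_SI R \<longleftrightarrow> (\<forall>t1 t2 t3 k. t1 > 0 \<and> t2 > 0 \<and> t3 > 0 \<and> k > 0 \<longrightarrow>
     rank_eq R (triad t1 t2 t3) (triad (k*t1) (k^2*t2) (k*t3)))"

definition prop_MON :: "(pcm \<Rightarrow> pcm \<Rightarrow> bool) \<Rightarrow> bool" where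
  "prop_MON R \<longleftrightarrow> (\<forall>A\<in>PCMs. \<forall>T. is_triad_of T A \<longrightarrow> R T A)"

definition prop_RED :: "(pcm \<Rightarrow> pcm \<Rightarrow> bool) \<Rightarrow> bool" where
  "prop_RED R \<longleftrightarrow> (\<forall>A\<in>PCMs. \<exists>T. is_triad_of T A \<and> rank_eq R A T)"

definition kappa :: "pcm \<Rightarrow> real" where
  "kappa A = Max {max ((snd A j k)^2 / snd A i k) (snd A i k / (snd A j k)^2) | i j k.
                  i < j \<and> j < k \<and> k < fst A}"

definition rank3 :: "pcm \<Rightarrow> pcm \<Rightarrow> bool" where
  "rank3 A B \<longleftrightarrow> kappa A \<le> kappa B"

end

theory Submission
  imports Defs
begin

definition fk :: "pcm \<Rightarrow> nat \<Rightarrow> nat \<Rightarrow> nat \<Rightarrow> real" where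
  "fk A i j k = max ((snd A j k)^2 / snd A i k) (snd A i k / (snd A j k)^2)"

definition idx :: "nat \<Rightarrow> (nat \<times> nat \<times> nat) set" where
  "idx n = {(i,j,k). i < j \<and> j < k \<and> k < n}"

lemma kappa_eq: "kappa A = Max ((\<lambda>(i,j,k). fk A i j k) ` idx (fst A))"
proof -
  have "{max ((snd A j k)^2 / snd A i k) (snd A i k / (snd A j k)^2) | i j k.
                  i < j \<and> j < k \<and> k < fst A} = (\<lambda>(i,j,k). fk A i j k) ` idx (fst A)"
    unfolding fk_def idx_def by (auto simp: image_def)
  thus ?thesis unfolding kappa_def by simp
qed

lemma idx_finite: "finite (idx n)"
proof -
  have "idx n \<subseteq> {..<n} \<times> {..<n} \<times> {..<n}" unfolding idx_def by auto
  thus ?thesis by (rule finite_subset) auto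
qed

lemma idx3: "idx 3 = {(0,1,2)}"
  unfolding idx_def by auto

lemma kappa3: "fst T = 3 \<Longrightarrow> kappa T = fk T 0 1 2"
  by (simp add: kappa_eq idx3)

lemma kappa_triad: "kappa (triad t1 t2 t3) = max (t3^2/t2) (t2/t3^2)"
  by (simp add: kappa3 triad_def fk_def)

lemma kappa_ge: "(i,j,k) \<in> idx (fst A) \<Longrightarrow> fk A i j k \<le> kappa A"
  unfolding kappa_eq by (rule Max_ge) (auto intro: idx_finite image_eqI[where x="(i,j,k)"])

lemma MON: "prop_MON rank3"
  unfolding prop_MON_def rank3_def
proof (intro ballI allI impI)
  fix A T assume A: "A \<in> PCMs" and T: "is_triad_of T A"
  then obtain m \<sigma> where m: "3 \<le> m" "m \<le> fst A" and inc: "\<forall>i j. i < j \<and> j < m \<longrightarrow> \<sigma> i < \<sigma> j"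
    and lt: "\<forall>i<m. \<sigma> i < fst A" and Tdef: "T = submatrix A m \<sigma>" and f3: "fst T = 3"
    unfolding is_triad_of_def is_submatrix_def by blast
  have m3: "m = 3" using f3 Tdef by (simp add: submatrix_def)
  have "kappa T = fk A (\<sigma> 0) (\<sigma> 1) (\<sigma> 2)"
    using f3 by (simp add: kappa3 Tdef m3 submatrix_def fk_def)
  also have "\<dots> \<le> kappa A"
    apply (rule kappa_ge) using inc lt m3 unfolding idx_def by auto
  finally show "kappa T \<le> kappa A" .
qed

lemma RED: "prop_RED rank3"
  unfolding prop_RED_def
proof
  fix A assume A: "A \<in> PCMs"
  hence n: "fst A \<ge> 3" by (simp add: PCMs_def)
  let ?S = "(\<lambda>(i,j,k). fk A i j k) ` idx (fst A)"
  have i0: "(0,1,2) \<in> idx (fst A)" using n unfolding idx_def by auto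
  hence ne: "?S \<noteq> {}" by blast
  have "kappa A \<in> ?S" unfolding kappa_eq by (rule Max_in) (use idx_finite ne in auto)
  then obtain i j k where ijk: "(i,j,k) \<in> idx (fst A)" and kv: "kappa A = fk A i j k" by auto
  define \<sigma> where "\<sigma> = (\<lambda>x::nat. if x = 0 then i else if x = 1 then j else k)"
  define T where "T = submatrix A 3 \<sigma>"
  have sub: "is_submatrix T A"
    unfolding is_submatrix_def
    apply (rule exI[of _ 3], rule exI[of _ \<sigma>])
    using n ijk unfolding T_def \<sigma>_def idx_def
    by (auto simp: less_Suc_eq numeral_3_eq_3)
  have f3: "fst T = 3" by (simp add: T_def submatrix_def)
  have "kappa T = fk A i j k"
    using f3 by (simp add: kappa3 T_def submatrix_def fk_def \<sigma>_def)
  hence "rank_eq rank3 A T" using kv by (simp add: rank_eq_def rank3_def)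
  thus "\<exists>T. is_triad_of T A \<and> rank_eq rank3 A T"
    using sub f3 unfolding is_triad_of_def by blast
qed

theorem mainTheorem4:
  shows "inconsistency_ranking rank3 \<and> prop_PR rank3 \<and> prop_IIP rank3 \<and>
         prop_SI rank3 \<and> prop_MON rank3 \<and> prop_RED rank3 \<and> \<not> prop_HTE rank3"
proof (intro conjI)
  show "inconsistency_ranking rank3"
    unfolding inconsistency_ranking_def rank3_def by auto
  show "prop_PR rank3"
  proof (unfold prop_PR_def, intro allI impI)
    fix s t :: real assume st: "s \<ge> 1 \<and> t \<ge> 1"
    have a: "max (1/s) s = s" using st by (simp add: max_def) (smt (verit) divide_le_eq_1)
    have b: "max (1/t) t = t" using st by (simp add: max_def) (smt (verit) divide_le_eq_1)
    show "rank3 (triad 1 s 1) (triad 1 t 1) = (s \<le> t)"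
      by (simp add: rank3_def kappa_triad a b)
  qed
  show "prop_IIP rank3"
    unfolding prop_IIP_def rank_eq_def rank3_def kappa_triad
    by (auto simp: power_divide max.commute)
  show "prop_SI rank3"
    unfolding prop_SI_def rank_eq_def rank3_def kappa_triad
    by (auto simp: power_mult_distrib power2_eq_square)
  show "prop_MON rank3" by (rule MON)
  show "prop_RED rank3" by (rule RED)
  show "\<not> prop_HTE rank3"
  proof
    assume "prop_HTE rank3"
    hence "rank_eq rank3 (triad 1 1 2) (triad 1 (1/2) 1)" unfolding prop_HTE_def by force
    thus False by (simp add: rank_eq_def rank3_def kappa_triad)
  qed
qed

end
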